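(* Let $G'$ be a connected graph and $x,v\in V(G')$ distinct vertices with $N_{G'}[x]\subseteq N_{G'}[v]$. Let $T$ be a search tree on $G=G'-x$ and $i\in\{0,\ldots,d_{T,v}\}$. Then $T(i,x,v)$ is a search tree on $G'$. Moreover, the vertices $T(i,x,v)$, $i\in\{0,\ldots,d_{T,v}\}$, lie on a path in $\mathcal{R}(G')$.
   Context: $N[\cdot]$ denotes the closed neighbourhood. For a connected graph $G$, a search tree on $G$ is a rooted tree with vertex set $V(G)$ defined recursively: its root is some vertex $r\in V(G)$, and the children of $r$ are the roots of search trees on the connected components of $G-r$. For a rooted tree $T$ and $w\in V(T)$, $T|w$ denotes the subtree rooted at $w$ and $d_{T,w}$ the distance from the root to $w$. Let $T$ be a search tree on $G$, let $b$ be a child of $a$ in $T$, and let $p$ be the parent of $a$ (if it exists). The $ab$-rotation transforms $T$ into the search tree $T'$ in which: $a$ is a child of $b$ and $b$ is a child of $p$ (or $b$ is the root if $a$ was the root); every subtree of $a$ in $T$ other than $T|b$ is a subtree of $a$ in $T'$; and every subtree $S$ of $b$ in $T$ is a subtree of $a$ in $T'$ if $a$ is adjacent in $G$ to some vertex of $S$, and a subtree of $b$ in $T'$ otherwise. The rotation graph $\mathcal{R}(G)$ has the search trees on $G$ as vertices, two adjacent iff they differ by one rotation. Insertion: for a rooted tree $T$, $v\in V(T)$ with $d=d_{T,v}$ and root-to-$v$ path $a_0,\ldots,a_d=v$, and $x\notin V(T)$: $T(0,x,v)$ has $x$ as new root with $T$ as its only subtree; for $1\le i\le d$, $T(i,x,v)$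 is obtained by subdividing the edge $a_{i-1}a_i$ with the new vertex $x$ (root unchanged). *)

theory Defs
  imports Main "HOL-Library.FSet"
begin

text \<open>A graph is given by a global edge set E of 2-element sets; every graph considered
is the subgraph induced by E on a vertex set S.  G' = (V', E) and G' - x is the
subgraph induced on V' - {x}.\<close>

definition adj :: "'a set set \<Rightarrow> 'a \<Rightarrow> 'a \<Rightarrow> bool" where
  "adj E u v \<longleftrightarrow> u \<noteq> v \<and> {u, v} \<in> E"

definition reach :: "'a set set \<Rightarrow> 'a set \<Rightarrow> 'a \<Rightarrow> 'a \<Rightarrow> bool" where
  "reach E S = (\<lambda>u w. u \<in> S \<and> w \<in> S \<and> adj E u w)\<^sup>*\<^sup>*"

definition connected_on :: "'a set set \<Rightarrow> 'a set \<Rightarrow> bool" where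
  "connected_on E S \<longleftrightarrow> S \<noteq> {} \<and> (\<forall>u\<in>S. \<forall>w\<in>S. reach E S u w)"

definition components :: "'a set set \<Rightarrow> 'a set \<Rightarrow> 'a set set" where
  "components E S = (\<lambda>u. {w \<in> S. reach E S u w}) ` S"

definition closed_nbhd :: "'a set set \<Rightarrow> 'a set \<Rightarrow> 'a \<Rightarrow> 'a set" where
  "closed_nbhd E V x = insert x {u \<in> V. adj E x u}"

datatype 'a rtree = Node 'a "'a rtree fset"

primrec troot :: "'a rtree \<Rightarrow> 'a" where
  "troot (Node r Ts) = r"

primrec tchildren :: "'a rtree \<Rightarrow> 'a rtree fset" where
  "tchildren (Node r Ts) = Ts"

primrec tverts :: "'a rtree \<Rightarrow> 'a set" where
  "tverts (Node r Ts) = insert r (\<Union> (fset (fimage tverts Ts)))"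

primrec subtrees :: "'a rtree \<Rightarrow> 'a rtree set" where
  "subtrees (Node r Ts) = insert (Node r Ts) (\<Union> (fset (fimage subtrees Ts)))"

definition is_child :: "'a rtree \<Rightarrow> 'a \<Rightarrow> 'a \<Rightarrow> bool" where
  "is_child T a b \<longleftrightarrow> (\<exists>S \<in> subtrees T. troot S = a \<and> (\<exists>U \<in> fset (tchildren S). troot U = b))"

text \<open>Distance d_{T,v} from the root to v (meaningful for v in tverts T).\<close>
primrec depth :: "'a \<Rightarrow> 'a rtree \<Rightarrow> nat" where
  "depth v (Node r Ts) =
     (if v = r then 0
      else Suc (Max (insert 0 (fset (fimage (\<lambda>S. if v \<in> tverts S then depth v S else 0) Ts)))))"

inductive search_tree :: "'a set set \<Rightarrow> 'a set \<Rightarrow> 'a rtree \<Rightarrow> bool" for E where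
  "\<lbrakk> connected_on E V; r \<in> V;
     inj_on tverts (fset Ts);
     tverts ` fset Ts = components E (V - {r});
     \<forall>S \<in> fset Ts. search_tree E (tverts S) S \<rbrakk>
   \<Longrightarrow> search_tree E V (Node r Ts)"

definition touches :: "'a set set \<Rightarrow> 'a \<Rightarrow> 'a rtree \<Rightarrow> bool" where
  "touches E a S \<longleftrightarrow> (\<exists>w \<in> tverts S. adj E a w)"

definition rot_local :: "'a set set \<Rightarrow> 'a \<Rightarrow> 'a \<Rightarrow> 'a rtree fset \<Rightarrow> 'a rtree" where
  "rot_local E a b Ts =
     (let Tb = (THE S. S |\<in>| Ts \<and> troot S = b); Ub = tchildren Tb
      in Node b (ffilter (\<lambda>S. \<not> touches E a S) Ub
                 |\<union>| {| Node a ((Ts |-| {|Tb|}) |\<union>| ffilter (touches E a) Ub) |}))"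

primrec rotate :: "'a set set \<Rightarrow> 'a \<Rightarrow> 'a \<Rightarrow> 'a rtree \<Rightarrow> 'a rtree" where
  "rotate E a b (Node r Ts) =
     (if r = a then rot_local E a b Ts else Node r (fimage (rotate E a b) Ts))"

definition rot_adj :: "'a set set \<Rightarrow> 'a set \<Rightarrow> 'a rtree \<Rightarrow> 'a rtree \<Rightarrow> bool" where
  "rot_adj E V T T' \<longleftrightarrow> search_tree E V T \<and> search_tree E V T' \<and>
     ((\<exists>a b. is_child T a b \<and> T' = rotate E a b T) \<or>
      (\<exists>a b. is_child T' a b \<and> T = rotate E a b T'))"

definition rot_path :: "'a set set \<Rightarrow> 'a set \<Rightarrow> 'a rtree list \<Rightarrow> bool" where
  "rot_path E V ps \<longleftrightarrow> ps \<noteq> [] \<and> distinct ps \<and> (\<forall>T \<in> set ps. search_tree E V T) \<and>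
     (\<forall>j. Suc j < length ps \<longrightarrow> rot_adj E V (ps ! j) (ps ! Suc j))"

primrec ins :: "'a rtree \<Rightarrow> nat \<Rightarrow> 'a \<Rightarrow> 'a \<Rightarrow> 'a rtree" where
  "ins (Node r Ts) i x v =
     (if i = 0 then Node x {| Node r Ts |}
      else Node r (fimage (\<lambda>S. if v \<in> tverts S then ins S (i - 1) x v else S) Ts))"

end

theory Submission
  imports Defs
begin


lemma adj_sym: "adj E u w = adj E w u"
  unfolding adj_def by (auto simp: insert_commute)

lemma adj_irrefl: "\<not> adj E u u"
  unfolding adj_def by auto

lemma reach_refl: "reach E S u u"
  unfolding reach_def by simp

lemma reach_trans: "reach E S a b \<Longrightarrow> reach E S b c \<Longrightarrow> reach E S a c"
  unfolding reach_def by (rule rtranclp_trans)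

lemma reach_sym: "reach E S a b \<Longrightarrow> reach E S b a"
proof -
  have "symp (\<lambda>u w. u \<in> S \<and> w \<in> S \<and> adj E u w)"
    by (auto simp: symp_def adj_sym)
  then have "symp (reach E S)" unfolding reach_def by (rule symp_rtranclp)
  then show "reach E S a b \<Longrightarrow> reach E S b a" by (auto simp: symp_def)
qed

lemma reach_step: "a \<in> S \<Longrightarrow> b \<in> S \<Longrightarrow> adj E a b \<Longrightarrow> reach E S a b"
  unfolding reach_def by auto

lemma reach_mono: "reach E S a b \<Longrightarrow> S \<subseteq> S' \<Longrightarrow> reach E S' a b"
  unfolding reach_def by (erule rtranclp_mono[THEN predicate2D, rotated]) auto

lemma reach_in: "reach E S a b \<Longrightarrow> a \<noteq> b \<Longrightarrow> a \<in> S \<and> b \<in> S"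
  unfolding reach_def by (induction rule: rtranclp_induct) auto

lemma comp_eq: "C \<in> components E S \<Longrightarrow> v \<in> C \<Longrightarrow> C = {w\<in>S. reach E S v w}"
  unfolding components_def
  by (auto intro: reach_trans reach_sym)

lemma comp_v: "v \<in> S \<Longrightarrow> {w\<in>S. reach E S v w} \<in> components E S"
  unfolding components_def by auto

lemma comp_sub: "C \<in> components E S \<Longrightarrow> C \<subseteq> S"
  unfolding components_def by auto

lemma comp_union: "\<Union>(components E S) = S"
  unfolding components_def by (auto intro: reach_refl)

lemma comp_connected_single:
  assumes "connected_on E W" shows "components E W = {W}"
  using assms unfolding connected_on_def components_def by auto

lemma connected_insert:
  assumes "connected_on E W" "v \<in> W" "adj E x v"
  shows "connected_on E (insert x W)"
proof -
  have r: "reach E (insert x W) u w" if "u \<in> W" "w \<in> W" for u w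
    using assms that unfolding connected_on_def by (auto intro: reach_mono)
  have xv: "reach E (insert x W) x v" using assms by (intro reach_step) auto
  have xw: "reach E (insert x W) x w" if "w \<in> W" for w
    using xv r[OF assms(2) that] by (rule reach_trans)
  show ?thesis unfolding connected_on_def
  proof (intro conjI ballI)
    show "insert x W \<noteq> {}" by simp
    fix u w assume "u \<in> insert x W" "w \<in> insert x W"
    then show "reach E (insert x W) u w"
      using r xw reach_sym[OF xw] reach_refl[of E "insert x W" x] by auto
  qed
qed

lemma reach_insert_aux:
  assumes "x \<notin> S" "v \<in> S" "\<forall>u\<in>S. adj E x u \<longrightarrow> u = v \<or> adj E v u"
    and "reach E (insert x S) a b" "a \<in> S"
  shows "(b \<in> S \<and> reach E S a b) \<or> (b = x \<and> reach E S a v)"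
  using assms(4) unfolding reach_def[of E "insert x S"]
proof (induction rule: rtranclp_induct)
  case base then show ?case using assms by (simp add: reach_refl)
next
  case (step b c)
  from step.hyps(2) have "c \<in> insert x S" "b \<in> insert x S" "adj E b c" by auto
  from step.IH show ?case
  proof
    assume h: "b \<in> S \<and> reach E S a b"
    show ?case
    proof (cases "c = x")
      case True
      then have "b = v \<or> adj E v b" using assms(3) h \<open>adj E b c\<close> adj_sym by metis
      then have "reach E S a v" using h assms(2)
        by (metis reach_step reach_sym reach_trans)
      then show ?thesis using True by simp
    next
      case False
      then have "c \<in> S" using \<open>c \<in> insert x S\<close> by simp
      then show ?thesis using h \<open>adj E b c\<close> by (metis reach_step reach_trans)
    qed
  next
    assume h: "b = x \<and> reach E S a v"
    then have "c \<noteq> x" using \<open>adj E b c\<close> adj_irrefl by metis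
    then have "c \<in> S" using \<open>c \<in> insert x S\<close> by simp
    have "c = v \<or> adj E v c" using assms(3) h \<open>adj E b c\<close> \<open>c \<in> S\<close> by metis
    then have "reach E S a c" using h assms(2) \<open>c \<in> S\<close>
      by (metis reach_step reach_trans)
    then show ?thesis using \<open>c \<in> S\<close> by simp
  qed
qed

lemma components_insert:
  assumes "x \<notin> S" "v \<in> S" "adj E x v" "\<forall>u\<in>S. adj E x u \<longrightarrow> u = v \<or> adj E v u"
  defines "Cv \<equiv> {w\<in>S. reach E S v w}"
  shows "components E (insert x S) = insert (insert x Cv) (components E S - {Cv})"
proof -
  have R: "reach E (insert x S) a b \<longleftrightarrow> reach E S a b" if "a \<in> S" "b \<in> S" for a b
  proof
    assume "reach E (insert x S) a b"
    then show "reach E S a b" using reach_insert_aux[OF assms(1,2,4), of a b] that assms(1) by auto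
  next
    assume "reach E S a b"
    then show "reach E (insert x S) a b" by (rule reach_mono) auto
  qed
  have RX: "reach E (insert x S) x b \<longleftrightarrow> reach E S v b" if "b \<in> S" for b
  proof
    assume "reach E (insert x S) x b"
    then have "reach E (insert x S) b x" by (rule reach_sym)
    then show "reach E S v b"
    proof -
      have "reach E S b v"
        using reach_insert_aux[OF assms(1,2,4), of b x] that assms(1) \<open>reach E (insert x S) b x\<close> by blast
      then show ?thesis by (rule reach_sym)
    qed
  next
    assume "reach E S v b"
    then have "reach E (insert x S) v b" by (rule reach_mono) auto
    moreover have "reach E (insert x S) x v" using assms by (intro reach_step) auto
    ultimately show "reach E (insert x S) x b" using reach_trans by metis
  qed
  have compx: "{w \<in> insert x S. reach E (insert x S) x w} = insert x Cv"
  proof (rule set_eqI)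
    fix w show "w \<in> {w \<in> insert x S. reach E (insert x S) x w} \<longleftrightarrow> w \<in> insert x Cv"
    proof (cases "w = x")
      case True then show ?thesis using reach_refl[of E "insert x S" x] by simp
    next
      case False then show ?thesis using RX[of w] assms(1) unfolding Cv_def by auto
    qed
  qed
  have compu: "{w \<in> insert x S. reach E (insert x S) u w} =
     (if reach E S v u then insert x Cv else {w\<in>S. reach E S u w})" if "u \<in> S" for u
  proof (cases "reach E S v u")
    case True
    have "{w \<in> insert x S. reach E (insert x S) u w} = {w \<in> insert x S. reach E (insert x S) x w}"
    proof -
      have "reach E (insert x S) x u" using RX True that by simp
      then have "reach E (insert x S) u w \<longleftrightarrow> reach E (insert x S) x w" for w
        by (meson reach_trans reach_sym)
      then show ?thesis by auto
    qed
    then show ?thesis using compx True by simp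
  next
    case False
    have nx: "\<not> reach E (insert x S) u x"
    proof
      assume "reach E (insert x S) u x"
      then have "reach E (insert x S) x u" by (rule reach_sym)
      then show False using RX that False by simp
    qed
    have "{w \<in> insert x S. reach E (insert x S) u w} = {w\<in>S. reach E S u w}"
    proof (rule set_eqI)
      fix w show "w \<in> {w \<in> insert x S. reach E (insert x S) u w} \<longleftrightarrow> w \<in> {w\<in>S. reach E S u w}"
        using nx R[OF that, of w] assms(1) by (cases "w = x") auto
    qed
    then show ?thesis using False by simp
  qed
  have CvC: "Cv \<in> components E S" unfolding Cv_def using assms(2) by (rule comp_v)
  show ?thesis
  proof (rule set_eqI, rule iffI)
    fix C assume "C \<in> components E (insert x S)"
    then obtain u where u: "u \<in> insert x S" "C = {w \<in> insert x S. reach E (insert x S) u w}"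
      unfolding components_def by auto
    show "C \<in> insert (insert x Cv) (components E S - {Cv})"
    proof (cases "u = x")
      case True then show ?thesis using u compx by simp
    next
      case False
      then have uS: "u \<in> S" using u by simp
      show ?thesis
      proof (cases "reach E S v u")
        case True then show ?thesis using u compu[OF uS] by simp
      next
        case F: False
        have "u \<notin> Cv" using F unfolding Cv_def by simp
        then have "{w\<in>S. reach E S u w} \<noteq> Cv"
          using uS reach_refl[of E S u] by blast
        then show ?thesis using u compu[OF uS] F uS unfolding components_def by auto
      qed
    qed
  next
    fix C assume C: "C \<in> insert (insert x Cv) (components E S - {Cv})"
    show "C \<in> components E (insert x S)"
    proof (cases "C = insert x Cv")
      case True then show ?thesis using compx unfolding components_def by blast
    next
      case False
      then obtain u where uS: "u \<in> S" and Cu: "C = {w\<in>S. reach E S u w}" and ne: "C \<noteq> Cv"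
        using C unfolding components_def by auto
      have "\<not> reach E S v u"
      proof
        assume "reach E S v u"
        then have "C = Cv" unfolding Cu Cv_def by (auto intro: reach_trans reach_sym)
        then show False using ne by simp
      qed
      then have "C = {w \<in> insert x S. reach E (insert x S) u w}" using compu[OF uS] Cu by simp
      then show ?thesis using uS unfolding components_def by blast
    qed
  qed
qed



lemma st_tverts: "search_tree E V T \<Longrightarrow> tverts T = V"
proof (induction rule: search_tree.induct)
  case (1 V r Ts)
  have "\<Union> (tverts ` fset Ts) = \<Union> (components E (V - {r}))"
    using 1(4) by simp
  also have "\<dots> = V - {r}" by (rule comp_union)
  finally show ?case using 1(2) by auto
qed

lemma st_cases:
  assumes "search_tree E V (Node r Ts)"
  shows "connected_on E V" "r \<in> V" "inj_on tverts (fset Ts)"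
    "tverts ` fset Ts = components E (V - {r})" "\<forall>S\<in>fset Ts. search_tree E (tverts S) S"
proof -
  have "connected_on E V \<and> r \<in> V \<and> inj_on tverts (fset Ts) \<and>
    tverts ` fset Ts = components E (V - {r}) \<and> (\<forall>S\<in>fset Ts. search_tree E (tverts S) S)"
    using assms by (rule search_tree.cases) simp
  then show "connected_on E V" "r \<in> V" "inj_on tverts (fset Ts)"
    "tverts ` fset Ts = components E (V - {r})" "\<forall>S\<in>fset Ts. search_tree E (tverts S) S"
    by simp_all
qed

lemma st_child_sub:
  assumes "search_tree E V (Node r Ts)" "S \<in> fset Ts"
  shows "tverts S \<subseteq> V - {r}"
proof -
  have "tverts S \<in> components E (V - {r})" using st_cases(4)[OF assms(1)] assms(2) by auto
  then show ?thesis by (rule comp_sub)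
qed

lemma st_child_unique:
  assumes "search_tree E V (Node r Ts)" "S \<in> fset Ts" "S' \<in> fset Ts"
    "v \<in> tverts S" "v \<in> tverts S'"
  shows "S = S'"
proof -
  have c1: "tverts S \<in> components E (V - {r})" and c2: "tverts S' \<in> components E (V - {r})"
    using st_cases(4)[OF assms(1)] assms(2,3) by auto
  have "tverts S = {w \<in> V - {r}. reach E (V - {r}) v w}" "tverts S' = {w \<in> V - {r}. reach E (V - {r}) v w}"
    using comp_eq[OF c1 assms(4)] comp_eq[OF c2 assms(5)] by simp_all
  then have "tverts S = tverts S'" by simp
  then show ?thesis using st_cases(3)[OF assms(1)] assms(2,3) by (auto dest: inj_onD)
qed

lemma st_child_exists:
  assumes "search_tree E V (Node r Ts)" "v \<in> V" "v \<noteq> r"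
  shows "\<exists>S\<in>fset Ts. v \<in> tverts S"
proof -
  have "v \<in> \<Union> (components E (V - {r}))" using assms comp_union[of E "V - {r}"] by simp
  then show ?thesis using st_cases(4)[OF assms(1)] by auto
qed

lemma max_lemma:
  assumes "finite F" "a \<in> F" "g a = d" "\<forall>b\<in>F. b \<noteq> a \<longrightarrow> g b = (0::nat)"
  shows "Max (insert 0 (g ` F)) = d"
proof -
  have "insert 0 (g ` F) = {0, d}" using assms by auto
  then show ?thesis by simp
qed

lemma depth_child:
  assumes "search_tree E V (Node r Ts)" "S \<in> fset Ts" "v \<in> tverts S"
  shows "depth v (Node r Ts) = Suc (depth v S)"
proof -
  have "v \<noteq> r" using st_child_sub[OF assms(1,2)] assms(3) by auto
  moreover have "Max (insert 0 ((\<lambda>S. if v \<in> tverts S then depth v S else 0) ` fset Ts)) = depth v S"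
    by (rule max_lemma) (use assms st_child_unique[OF assms(1)] in auto)
  ultimately show ?thesis by simp
qed

lemma ins0: "ins S 0 x v = Node x {|S|}"
  by (cases S) simp

lemma rotate_notin: "a \<notin> tverts T \<Longrightarrow> rotate E a b T = T"
proof (induction T)
  case (Node r Ts)
  then have "rotate E a b |`| Ts = id |`| Ts"
    by (intro fimage_cong) auto
  then show ?case using Node.prems by auto
qed

definition nb :: "'a set set \<Rightarrow> 'a set \<Rightarrow> 'a \<Rightarrow> 'a \<Rightarrow> bool" where
  "nb E W x v \<longleftrightarrow> v \<in> W \<and> x \<notin> W \<and> adj E x v \<and> (\<forall>u\<in>W. adj E x u \<longrightarrow> u = v \<or> adj E v u)"

lemma nb_sub: "nb E W x v \<Longrightarrow> v \<in> W' \<Longrightarrow> W' \<subseteq> W \<Longrightarrow> nb E W' x v"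
  unfolding nb_def by blast

lemma ins_st:
  "search_tree E W T \<Longrightarrow> nb E W x v \<Longrightarrow> i \<le> depth v T \<Longrightarrow>
   search_tree E (insert x W) (ins T i x v)"
proof (induction arbitrary: i rule: search_tree.induct)
  case (1 V r Ts)
  define T0 where "T0 = Node r Ts"
  have st: "search_tree E V T0" unfolding T0_def using 1(1-5) by (intro search_tree.intros) auto
  have nb: "v \<in> V" "x \<notin> V" "adj E x v" "\<forall>u\<in>V. adj E x u \<longrightarrow> u = v \<or> adj E v u"
    using 1(6) unfolding nb_def by auto
  have conn: "connected_on E (insert x V)" using connected_insert[OF 1(1) nb(1,3)] .
  show ?case
  proof (cases "i = 0")
    case True
    have "components E (insert x V - {x}) = {V}"
      using nb(2) comp_connected_single[OF 1(1)] by simp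
    then have "search_tree E (insert x V) (Node x {|T0|})"
      using conn st st_tverts[OF st] by (intro search_tree.intros) auto
    then show ?thesis using True ins0[of T0 x v] unfolding T0_def by simp
  next
    case False
    have vr: "v \<noteq> r" using False 1(7) by (auto split: if_splits)
    obtain Sv where Sv: "Sv \<in> fset Ts" "v \<in> tverts Sv"
      using st_child_exists[OF st[unfolded T0_def] nb(1) vr] by blast
    have uniq: "S = Sv" if "S \<in> fset Ts" "v \<in> tverts S" for S
      using st_child_unique[OF st[unfolded T0_def] that(1) Sv(1) that(2) Sv(2)] .
    have sub: "tverts S \<subseteq> V - {r}" if "S \<in> fset Ts" for S
      using st_child_sub[OF st[unfolded T0_def] that] .
    have xnot: "x \<notin> tverts S" if "S \<in> fset Ts" for S
      using sub[OF that] nb(2) by auto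
    have dep: "depth v T0 = Suc (depth v Sv)"
      unfolding T0_def by (rule depth_child[OF st[unfolded T0_def] Sv])
    have idep: "i - 1 \<le> depth v Sv" using dep 1(7) False unfolding T0_def by simp
    have nbSv: "nb E (tverts Sv) x v" using nb_sub[OF 1(6) Sv(2)] sub[OF Sv(1)] by auto
    have IH: "search_tree E (insert x (tverts Sv)) (ins Sv (i - 1) x v)"
      using 1(5) Sv(1) nbSv idep by blast
    define f where "f = (\<lambda>S. if v \<in> tverts S then ins S (i - 1) x v else S)"
    have insT: "ins (Node r Ts) i x v = Node r (f |`| Ts)"
      using False unfolding f_def by simp
    have fSv: "f Sv = ins Sv (i - 1) x v" unfolding f_def using Sv by simp
    have fS: "f S = S" if "S \<in> fset Ts" "S \<noteq> Sv" for S
      unfolding f_def using uniq[OF that(1)] that(2) by auto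
    have tvSv: "tverts (f Sv) = insert x (tverts Sv)" using st_tverts[OF IH] fSv by simp
    have tvf: "tverts (f S) - {x} = tverts S" if "S \<in> fset Ts" for S
      using xnot[OF that] tvSv fS[OF that] by (cases "S = Sv") auto
    define Cv where "Cv = {w \<in> V - {r}. reach E (V - {r}) v w}"
    have CvSv: "tverts Sv = Cv"
    proof -
      have "tverts Sv \<in> components E (V - {r})" using 1(4) Sv(1) by auto
      then show ?thesis unfolding Cv_def using comp_eq Sv(2) by metis
    qed
    have comps: "components E (insert x V - {r}) = insert (insert x Cv) (components E (V - {r}) - {Cv})"
    proof -
      have "insert x V - {r} = insert x (V - {r})" using nb(2) 1(2) by auto
      moreover have "components E (insert x (V - {r})) = insert (insert x Cv) (components E (V - {r}) - {Cv})"
        unfolding Cv_def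
        by (rule components_insert) (use nb vr in auto)
      ultimately show ?thesis by simp
    qed
    have inj: "inj_on tverts (fset (f |`| Ts))"
    proof (rule inj_onI)
      fix A B assume A: "A \<in> fset (f |`| Ts)" and B: "B \<in> fset (f |`| Ts)" and eq: "tverts A = tverts B"
      obtain SA where SA: "SA \<in> fset Ts" "A = f SA" using A by auto
      obtain SB where SB: "SB \<in> fset Ts" "B = f SB" using B by auto
      have "tverts SA = tverts SB" using tvf[OF SA(1)] tvf[OF SB(1)] eq SA(2) SB(2) by simp
      then have "SA = SB" using 1(3) SA(1) SB(1) by (auto dest: inj_onD)
      then show "A = B" using SA SB by simp
    qed
    have img: "tverts ` fset (f |`| Ts) = components E (insert x V - {r})"
    proof -
      have "fset Ts = insert Sv (fset Ts - {Sv})" using Sv(1) by auto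
      then have "tverts ` fset (f |`| Ts) = insert (tverts (f Sv)) ((\<lambda>S. tverts (f S)) ` (fset Ts - {Sv}))"
        by (metis fimage.rep_eq image_image image_insert)
      also have "(\<lambda>S. tverts (f S)) ` (fset Ts - {Sv}) = tverts ` (fset Ts - {Sv})"
        using fS by (intro image_cong) auto
      also have "tverts ` (fset Ts - {Sv}) = tverts ` fset Ts - tverts ` {Sv}"
        using 1(3) Sv(1) by (intro inj_on_image_set_diff) auto
      finally show ?thesis using tvSv CvSv comps 1(4) by simp
    qed
    have subs: "\<forall>S\<in>fset (f |`| Ts). search_tree E (tverts S) S"
    proof
      fix A assume "A \<in> fset (f |`| Ts)"
      then obtain S where S: "S \<in> fset Ts" "A = f S" by auto
      show "search_tree E (tverts A) A"
      proof (cases "S = Sv")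
        case True then show ?thesis using IH tvSv fSv S(2) by simp
      next
        case False then show ?thesis using fS[OF S(1) False] S 1(5) by auto
      qed
    qed
    have "search_tree E (insert x V) (Node r (f |`| Ts))"
      using conn 1(2) inj img subs by (intro search_tree.intros) auto
    then show ?thesis using insT by simp
  qed
qed

lemma depth_ins:
  "search_tree E W T \<Longrightarrow> nb E W x v \<Longrightarrow> i \<le> depth v T \<Longrightarrow> depth x (ins T i x v) = i"
proof (induction arbitrary: i rule: search_tree.induct)
  case (1 V r Ts)
  define T0 where "T0 = Node r Ts"
  have st: "search_tree E V T0" unfolding T0_def using 1(1-5) by (intro search_tree.intros) auto
  have nb: "v \<in> V" "x \<notin> V" "adj E x v" "\<forall>u\<in>V. adj E x u \<longrightarrow> u = v \<or> adj E v u"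
    using 1(6) unfolding nb_def by auto
  show ?case
  proof (cases "i = 0")
    case True
    then show ?thesis using ins0[of T0 x v] unfolding T0_def by simp
  next
    case False
    have vr: "v \<noteq> r" using False 1(7) by (auto split: if_splits)
    have xr: "x \<noteq> r" using nb(2) 1(2) by auto
    obtain Sv where Sv: "Sv \<in> fset Ts" "v \<in> tverts Sv"
      using st_child_exists[OF st[unfolded T0_def] nb(1) vr] by blast
    have uniq: "S = Sv" if "S \<in> fset Ts" "v \<in> tverts S" for S
      using st_child_unique[OF st[unfolded T0_def] that(1) Sv(1) that(2) Sv(2)] .
    have sub: "tverts S \<subseteq> V - {r}" if "S \<in> fset Ts" for S
      using st_child_sub[OF st[unfolded T0_def] that] .
    have xnot: "x \<notin> tverts S" if "S \<in> fset Ts" for S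
      using sub[OF that] nb(2) by auto
    have dep: "depth v T0 = Suc (depth v Sv)"
      unfolding T0_def by (rule depth_child[OF st[unfolded T0_def] Sv])
    have idep: "i - 1 \<le> depth v Sv" using dep 1(7) False unfolding T0_def by simp
    have nbSv: "nb E (tverts Sv) x v" using nb_sub[OF 1(6) Sv(2)] sub[OF Sv(1)] by auto
    have stSv: "search_tree E (tverts Sv) Sv" using 1(5) Sv(1) by blast
    have IH: "depth x (ins Sv (i - 1) x v) = i - 1"
      using 1(5) Sv(1) nbSv idep by blast
    have xin: "x \<in> tverts (ins Sv (i - 1) x v)"
      using st_tverts[OF ins_st[OF stSv nbSv idep]] by simp
    define f where "f = (\<lambda>S. if v \<in> tverts S then ins S (i - 1) x v else S)"
    have insT: "ins (Node r Ts) i x v = Node r (f |`| Ts)"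
      using False unfolding f_def by simp
    have fSv: "f Sv = ins Sv (i - 1) x v" unfolding f_def using Sv by simp
    have fS: "f S = S" if "S \<in> fset Ts" "S \<noteq> Sv" for S
      unfolding f_def using uniq[OF that(1)] that(2) by auto
    have "Max (insert 0 ((\<lambda>S. if x \<in> tverts S then depth x S else 0) ` fset (f |`| Ts))) = i - 1"
    proof (rule max_lemma)
      show "finite (fset (f |`| Ts))" by simp
      show "f Sv \<in> fset (f |`| Ts)" using Sv(1) by simp
      show "(if x \<in> tverts (f Sv) then depth x (f Sv) else 0) = i - 1" using fSv xin IH by simp
      show "\<forall>b\<in>fset (f |`| Ts). b \<noteq> f Sv \<longrightarrow> (if x \<in> tverts b then depth x b else 0) = 0"
      proof (intro ballI impI)
        fix b assume "b \<in> fset (f |`| Ts)" "b \<noteq> f Sv"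
        then obtain S where S: "S \<in> fset Ts" "b = f S" "S \<noteq> Sv" by auto
        then show "(if x \<in> tverts b then depth x b else 0) = 0" using fS xnot by auto
      qed
    qed
    moreover have "depth x (Node r (f |`| Ts)) = Suc (Max (insert 0 (fset ((\<lambda>S. if x \<in> tverts S then depth x S else 0) |`| (f |`| Ts)))))"
      by (simp only: depth.simps if_not_P[OF xr])
    ultimately show ?thesis using insT False by (simp only: fimage.rep_eq)
  qed
qed

lemma subtrees_self: "T \<in> subtrees T"
  by (cases T) simp

lemma is_child_lift:
  assumes "is_child S a b" "S \<in> fset Ts"
  shows "is_child (Node r Ts) a b"
  using assms unfolding is_child_def by auto

lemma rot_step:
  "search_tree E W T \<Longrightarrow> nb E W x v \<Longrightarrow> j < depth v T \<Longrightarrow>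
   \<exists>b. is_child (ins T j x v) x b \<and> ins T (Suc j) x v = rotate E x b (ins T j x v)"
proof (induction arbitrary: j rule: search_tree.induct)
  case (1 V r Ts)
  define T0 where "T0 = Node r Ts"
  have st: "search_tree E V T0" unfolding T0_def using 1(1-5) by (intro search_tree.intros) auto
  have nb: "v \<in> V" "x \<notin> V" "adj E x v" "\<forall>u\<in>V. adj E x u \<longrightarrow> u = v \<or> adj E v u"
    using 1(6) unfolding nb_def by auto
  have vr: "v \<noteq> r" using 1(7) by (auto split: if_splits)
  have xr: "x \<noteq> r" using nb(2) 1(2) by auto
  obtain Sv where Sv: "Sv \<in> fset Ts" "v \<in> tverts Sv"
    using st_child_exists[OF st[unfolded T0_def] nb(1) vr] by blast
  have uniq: "S = Sv" if "S \<in> fset Ts" "v \<in> tverts S" for S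
    using st_child_unique[OF st[unfolded T0_def] that(1) Sv(1) that(2) Sv(2)] .
  have sub: "tverts S \<subseteq> V - {r}" if "S \<in> fset Ts" for S
    using st_child_sub[OF st[unfolded T0_def] that] .
  have xnot: "x \<notin> tverts S" if "S \<in> fset Ts" for S
    using sub[OF that] nb(2) by auto
  have dep: "depth v T0 = Suc (depth v Sv)"
    unfolding T0_def by (rule depth_child[OF st[unfolded T0_def] Sv])
  show ?case
  proof (cases "j = 0")
    case True
    define Cv where "Cv = {w \<in> V - {r}. reach E (V - {r}) v w}"
    have CvSv: "tverts Sv = Cv"
    proof -
      have "tverts Sv \<in> components E (V - {r})" using 1(4) Sv(1) by auto
      then show ?thesis unfolding Cv_def using comp_eq Sv(2) by metis
    qed
    have touch: "touches E x S \<longleftrightarrow> S = Sv" if "S \<in> fset Ts" for S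
    proof
      assume "S = Sv" then show "touches E x S" unfolding touches_def using Sv nb(3) by auto
    next
      assume "touches E x S"
      then obtain w where w: "w \<in> tverts S" "adj E x w" unfolding touches_def by auto
      have wV: "w \<in> V - {r}" using sub[OF that] w(1) by auto
      have "w = v \<or> adj E v w" using nb(4) wV w(2) by auto
      then have "w \<in> Cv"
      proof
        assume "w = v" then show ?thesis unfolding Cv_def using wV reach_refl by simp
      next
        assume "adj E v w"
        then have "reach E (V - {r}) v w" using wV nb(1) vr by (intro reach_step) auto
        then show ?thesis unfolding Cv_def using wV by simp
      qed
      then have "w \<in> tverts Sv" using CvSv by simp
      then show "S = Sv" using st_child_unique[OF st[unfolded T0_def] that Sv(1) w(1)] by simp
    qed
    have the: "(THE S. S |\<in>| {|T0|} \<and> troot S = r) = T0"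
      by (rule the_equality) (auto simp: T0_def)
    have f1: "ffilter (touches E x) Ts = {|Sv|}"
      by (rule fset_eqI) (use touch Sv(1) in auto)
    define g where "g = (\<lambda>S. if v \<in> tverts S then ins S (Suc 0 - 1) x v else S)"
    have gSv: "g Sv = Node x {|Sv|}" unfolding g_def using Sv ins0 by simp
    have gS: "g S = S" if "S \<in> fset Ts" "S \<noteq> Sv" for S
    proof -
      have "v \<notin> tverts S" using uniq that by blast
      then show ?thesis unfolding g_def by simp
    qed
    have f2: "ffilter (\<lambda>S. \<not> touches E x S) Ts |\<union>| {|Node x {|Sv|}|} = g |`| Ts"
    proof (rule fset_eqI, rule iffI)
      fix A assume A: "A |\<in>| ffilter (\<lambda>S. \<not> touches E x S) Ts |\<union>| {|Node x {|Sv|}|}"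
      show "A |\<in>| g |`| Ts"
      proof (cases "A = Node x {|Sv|}")
        case True then show ?thesis using gSv Sv(1) by (metis fimageI)
      next
        case False
        then have "A \<in> fset Ts" "\<not> touches E x A" using A by auto
        then have "A \<in> fset Ts" "A \<noteq> Sv" using touch by auto
        then show ?thesis using gS by (metis fimageI)
      qed
    next
      fix A assume "A |\<in>| g |`| Ts"
      then obtain S where S: "S \<in> fset Ts" "A = g S" by auto
      show "A |\<in>| ffilter (\<lambda>S. \<not> touches E x S) Ts |\<union>| {|Node x {|Sv|}|}"
      proof (cases "S = Sv")
        case True then show ?thesis using S gSv by simp
      next
        case False then show ?thesis using S gS[OF S(1) False] touch[OF S(1)] by simp
      qed
    qed
    have "rotate E x r (ins T0 0 x v) = rot_local E x r {|T0|}"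
      using ins0[of T0 x v] by simp
    also have "\<dots> = Node r (ffilter (\<lambda>S. \<not> touches E x S) Ts |\<union>| {|Node x {|Sv|}|})"
      unfolding rot_local_def Let_def the using f1 by (simp add: T0_def)
    also have "\<dots> = ins T0 (Suc 0) x v" using f2 unfolding g_def by (simp add: T0_def)
    finally have rot: "ins T0 (Suc 0) x v = rotate E x r (ins T0 0 x v)" by simp
    have ic: "is_child (ins T0 0 x v) x r"
      unfolding is_child_def using ins0[of T0 x v] subtrees_self[of "Node x {|T0|}"]
      by (auto simp: T0_def)
    show ?thesis using rot ic True unfolding T0_def by blast
  next
    case False
    have jdep: "j - 1 < depth v Sv" using dep 1(7) False unfolding T0_def by simp
    have nbSv: "nb E (tverts Sv) x v" using nb_sub[OF 1(6) Sv(2)] sub[OF Sv(1)] by auto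
    obtain b where b: "is_child (ins Sv (j - 1) x v) x b"
        "ins Sv (Suc (j - 1)) x v = rotate E x b (ins Sv (j - 1) x v)"
      using 1(5) Sv(1) nbSv jdep by blast
    define f where "f = (\<lambda>S. if v \<in> tverts S then ins S (j - 1) x v else S)"
    define g where "g = (\<lambda>S. if v \<in> tverts S then ins S (Suc j - 1) x v else S)"
    have insT: "ins (Node r Ts) j x v = Node r (f |`| Ts)"
      using False unfolding f_def by simp
    have insT': "ins (Node r Ts) (Suc j) x v = Node r (g |`| Ts)"
      unfolding g_def by simp
    have fSv: "f Sv = ins Sv (j - 1) x v" unfolding f_def using Sv by simp
    have ic: "is_child (ins (Node r Ts) j x v) x b"
    proof -
      have "f Sv \<in> fset (f |`| Ts)" using Sv(1) by simp
      then show ?thesis unfolding insT using b(1) fSv by (intro is_child_lift[of "f Sv"]) simp_all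
    qed
    have "rotate E x b |`| f |`| Ts = g |`| Ts"
      unfolding fimage_fimage
    proof (rule fimage_cong[OF refl])
      fix S assume S: "S |\<in>| Ts"
      show "rotate E x b (f S) = g S"
      proof (cases "S = Sv")
        case True
        have e: "Suc j - 1 = Suc (j - 1)" using False by simp
        show ?thesis using b(2) True Sv unfolding f_def g_def e by simp
      next
        case F: False
        then have "v \<notin> tverts S" using uniq S by auto
        then show ?thesis using rotate_notin[OF xnot[OF S]] unfolding f_def g_def by simp
      qed
    qed
    then have "ins (Node r Ts) (Suc j) x v = rotate E x b (ins (Node r Ts) j x v)"
      using insT insT' xr by simp
    then show ?thesis using ic by blast
  qed
qed


theorem lemma2p2:
  fixes E :: "'a set set" and V' :: "'a set" and x v :: 'a and T :: "'a rtree"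
  assumes "finite V'"
    and "connected_on E V'"
    and "x \<in> V'" and "v \<in> V'" and "x \<noteq> v"
    and "closed_nbhd E V' x \<subseteq> closed_nbhd E V' v"
    and "search_tree E (V' - {x}) T"
  shows "(\<forall>i \<le> depth v T. search_tree E V' (ins T i x v))
       \<and> (\<exists>ps. rot_path E V' ps \<and> (\<forall>i \<le> depth v T. ins T i x v \<in> set ps))"
proof -
  have "x \<in> closed_nbhd E V' v" using assms(6) unfolding closed_nbhd_def by auto
  then have "adj E v x" using assms(5) unfolding closed_nbhd_def by auto
  then have adjxv: "adj E x v" using adj_sym[of E x v] by simp
  have nbc: "\<forall>u\<in>V' - {x}. adj E x u \<longrightarrow> u = v \<or> adj E v u"
  proof (intro ballI impI)
    fix u assume u: "u \<in> V' - {x}" "adj E x u"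
    then have "u \<in> closed_nbhd E V' x" unfolding closed_nbhd_def by auto
    then have "u \<in> closed_nbhd E V' v" using assms(6) by auto
    then show "u = v \<or> adj E v u" unfolding closed_nbhd_def by auto
  qed
  have nb: "nb E (V' - {x}) x v" unfolding nb_def using adjxv nbc assms(4,5) by auto
  have iW: "insert x (V' - {x}) = V'" using assms(3) by auto
  define d where "d = depth v T"
  have P1: "\<forall>i \<le> d. search_tree E V' (ins T i x v)"
  proof (intro allI impI)
    fix i assume "i \<le> d"
    then show "search_tree E V' (ins T i x v)" using ins_st[OF assms(7) nb, of i] iW unfolding d_def by simp
  qed
  define ps where "ps = map (\<lambda>i. ins T i x v) [0..<Suc d]"
  have inj: "inj_on (\<lambda>i. ins T i x v) (set [0..<Suc d])"
  proof (rule inj_onI)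
    fix i j assume ij: "i \<in> set [0..<Suc d]" "j \<in> set [0..<Suc d]" and eq: "ins T i x v = ins T j x v"
    have il: "i \<le> depth v T" using ij(1) unfolding d_def by auto
    have jl: "j \<le> depth v T" using ij(2) unfolding d_def by auto
    have "i = depth x (ins T i x v)" using depth_ins[OF assms(7) nb il] by simp
    also have "\<dots> = depth x (ins T j x v)" using eq by simp
    also have "\<dots> = j" using depth_ins[OF assms(7) nb jl] by simp
    finally show "i = j" .
  qed
  have rp: "rot_path E V' ps"
    unfolding rot_path_def
  proof (intro conjI allI impI)
    show "ps \<noteq> []" unfolding ps_def by simp
    show "distinct ps" unfolding ps_def using inj by (simp add: distinct_map)
    show "\<forall>T\<in>set ps. search_tree E V' T"
    proof
      fix T' assume "T' \<in> set ps"
      then have "T' \<in> (\<lambda>i. ins T i x v) ` {0..<Suc d}" unfolding ps_def by (simp only: set_map set_upt)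
      then obtain i where "i \<in> {0..<Suc d}" "T' = ins T i x v" by blast
      then show "search_tree E V' T'" using P1 by simp
    qed
    fix j assume j: "Suc j < length ps"
    then have jd: "j < d" unfolding ps_def by simp
    have e1: "ps ! j = ins T j x v" and e2: "ps ! Suc j = ins T (Suc j) x v"
      unfolding ps_def using jd by (simp_all del: upt_Suc add: nth_map)
    obtain b where b: "is_child (ins T j x v) x b" "ins T (Suc j) x v = rotate E x b (ins T j x v)"
      using rot_step[OF assms(7) nb, of j] jd unfolding d_def by blast
    show "rot_adj E V' (ps ! j) (ps ! Suc j)"
    proof -
      have "search_tree E V' (ins T j x v)" "search_tree E V' (ins T (Suc j) x v)"
        using P1 jd by simp_all
      then show ?thesis unfolding rot_adj_def e1 e2 using b by blast
    qed
  qed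
  have "\<forall>i \<le> depth v T. ins T i x v \<in> set ps"
  proof (intro allI impI)
    fix i assume "i \<le> depth v T"
    then have "i \<in> {0..<Suc d}" unfolding d_def by simp
    then have "ins T i x v \<in> (\<lambda>i. ins T i x v) ` {0..<Suc d}" by (rule imageI)
    then show "ins T i x v \<in> set ps" unfolding ps_def by (simp only: set_map set_upt)
  qed
  then have "rot_path E V' ps \<and> (\<forall>i \<le> depth v T. ins T i x v \<in> set ps)" using rp by simp
  then have "\<exists>ps. rot_path E V' ps \<and> (\<forall>i \<le> depth v T. ins T i x v \<in> set ps)" by (rule exI)
  then show ?thesis using P1 unfolding d_def by simp
qed

end
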